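(* A set of atoms $M$ is an answer set by complement of a basic program $P$ if and only if $M$ is a strongly well-supported model of $\mathcal{C}(P)$.
   Context: Fix a countable set $\mathcal{A}$ of atoms. A c-atom is $A=(A_d,A_c)$, $A_d\subseteq\mathcal{A}$, $A_c\subseteq 2^{A_d}$; $(\{p\},\{\{p\}\})$ is elementary; $\bot=(\mathcal{A},\emptyset)$. Rule: $A\leftarrow A_1,\dots,A_k,\mathit{not}\,A_{k+1},\dots,\mathit{not}\,A_n$, $head(r)=A$, $pos(r)=\{A_1,..,A_k\}$, $neg(r)=\{A_{k+1},..,A_n\}$. Program = set of rules; positive if no naf-literals; basic if every head is elementary or $\bot$. $S\models A$ iff $S\cap A_d\in A_c$; $S\models\mathit{not}\,A$ iff $S\cap A_d\notin A_c$; model = satisfies all rules (a rule holds if its head holds or its body fails). Conditional satisfaction: $S\models_M A$ iff $S\models A$ and every $I$ with $S\cap A_d\subseteq I\subseteq M\cap A_d$ lies in $A_c$. For positive basic $P$: $T_P(S,M)=\{a\mid \exists r\in P,\ head(r)=(\{a\},\{\{a\}\}),\ S\models_M B\ \forall B\in pos(r)\}$, $T^0_P(\emptyset,M)=\emptyset$, $T^{i+1}_P(\emptyset,M)=T_P(T^i_P(\emptyset,M),M)$, $T^\infty_P(\emptyset,M)=\bigcup_i T^i_P(\emptyset,M)$; a model $M$ is an answer set iff $M=T^\infty_P(\emptyset,M)$. Complement $\bar A=(A_d,2^{A_d}\setminus A_c)$; $\mathcal{C}(P)$ replaces each $\mathit{not}\,A$ by $\bar A$; answer set by complement of $P$ =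 answer set of $\mathcal{C}(P)$. Level mappings: for $\ell:M\to\{1,2,\dots\}$, $H(X)=\max\{\ell(a)\mid a\in X\}$ ($\max\emptyset=0$), $L(A,M)=\min\{H(X)\mid X\in A_c,\ X\subseteq M,\ X\models_M A\}$, undefined if the set is empty. A model $M$ of basic $P$ is strongly well-supported iff there is such an $\ell$ such that for each $b\in M$ some $r\in P$ has $head(r)=(\{b\},\{\{b\}\})$, $M\models body(r)$, for every $A\in pos(r)$ $L(A,M)$ is defined and $\ell(b)>L(A,M)$, and for every $A\in neg(r)$ $L(\bar A,M)$ is defined and $\ell(b)>L(\bar A,M)$. *)

theory Defs
  imports Main "HOL-Library.Countable" "HOL-Library.Extended_Nat"
begin

text \<open>Atoms are the elements of a countable type 'a; the atom set is UNIV.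
A c-atom is a pair (domain, admissible solutions).\<close>

type_synonym 'a catom = "'a set \<times> 'a set set"

definition wf_catom :: "'a catom \<Rightarrow> bool" where
  "wf_catom A \<longleftrightarrow> snd A \<subseteq> Pow (fst A)"

definition elem :: "'a \<Rightarrow> 'a catom" where
  "elem p = ({p}, {{p}})"

definition bottom :: "'a catom" where
  "bottom = (UNIV, {})"

datatype 'a rule = Rule (head: "'a catom") (pos: "'a catom list") (neg: "'a catom list")

type_synonym 'a program = "'a rule set"

definition wf_prog :: "'a program \<Rightarrow> bool" where
  "wf_prog P \<longleftrightarrow> (\<forall>r\<in>P. wf_catom (head r) \<and> (\<forall>A\<in>set (pos r). wf_catom A)
                          \<and> (\<forall>A\<in>set (neg r). wf_catom A))"

definition positive :: "'a program \<Rightarrow> bool" where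
  "positive P \<longleftrightarrow> (\<forall>r\<in>P. neg r = [])"

definition basic :: "'a program \<Rightarrow> bool" where
  "basic P \<longleftrightarrow> (\<forall>r\<in>P. (\<exists>p. head r = elem p) \<or> head r = bottom)"

definition sat :: "'a set \<Rightarrow> 'a catom \<Rightarrow> bool" where
  "sat S A \<longleftrightarrow> S \<inter> fst A \<in> snd A"

definition sat_body :: "'a set \<Rightarrow> 'a rule \<Rightarrow> bool" where
  "sat_body S r \<longleftrightarrow> (\<forall>A\<in>set (pos r). sat S A) \<and> (\<forall>A\<in>set (neg r). \<not> sat S A)"

definition is_model :: "'a program \<Rightarrow> 'a set \<Rightarrow> bool" where
  "is_model P M \<longleftrightarrow> (\<forall>r\<in>P. sat_body M r \<longrightarrow> sat M (head r))"

definition csat :: "'a set \<Rightarrow> 'a set \<Rightarrow> 'a catom \<Rightarrow> bool" where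
  "csat S M A \<longleftrightarrow> sat S A \<and>
     (\<forall>I. S \<inter> fst A \<subseteq> I \<and> I \<subseteq> M \<inter> fst A \<longrightarrow> I \<in> snd A)"

definition T_op :: "'a program \<Rightarrow> 'a set \<Rightarrow> 'a set \<Rightarrow> 'a set" where
  "T_op P S M = {a. \<exists>r\<in>P. head r = elem a \<and> (\<forall>B\<in>set (pos r). csat S M B)}"

primrec T_iter :: "'a program \<Rightarrow> nat \<Rightarrow> 'a set \<Rightarrow> 'a set" where
  "T_iter P 0 M = {}"
| "T_iter P (Suc i) M = T_op P (T_iter P i M) M"

definition T_inf :: "'a program \<Rightarrow> 'a set \<Rightarrow> 'a set" where
  "T_inf P M = (\<Union>i. T_iter P i M)"

definition answer_set :: "'a program \<Rightarrow> 'a set \<Rightarrow> bool" where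
  "answer_set P M \<longleftrightarrow> is_model P M \<and> M = T_inf P M"

definition compl_catom :: "'a catom \<Rightarrow> 'a catom" where
  "compl_catom A = (fst A, Pow (fst A) - snd A)"

definition compl_rule :: "'a rule \<Rightarrow> 'a rule" where
  "compl_rule r = Rule (head r) (pos r @ map compl_catom (neg r)) []"

definition compl_prog :: "'a program \<Rightarrow> 'a program" where
  "compl_prog P = compl_rule ` P"

definition answer_set_by_complement :: "'a program \<Rightarrow> 'a set \<Rightarrow> bool" where
  "answer_set_by_complement P M \<longleftrightarrow> answer_set (compl_prog P) M"

text \<open>Level mappings. H(X) is the maximum level in X (0 for empty X); it is taken
in enat, i.e. it is \<infinity> if the levels in X are unbounded (max undefined).\<close>
definition H :: "('a \<Rightarrow> nat) \<Rightarrow> 'a set \<Rightarrow> enat" where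
  "H l X = Sup ((\<lambda>a. enat (l a)) ` X)"

definition L_cands :: "('a \<Rightarrow> nat) \<Rightarrow> 'a catom \<Rightarrow> 'a set \<Rightarrow> enat set" where
  "L_cands l A M = H l ` {X. X \<in> snd A \<and> X \<subseteq> M \<and> csat X M A}"

definition L_defined :: "('a \<Rightarrow> nat) \<Rightarrow> 'a catom \<Rightarrow> 'a set \<Rightarrow> bool" where
  "L_defined l A M \<longleftrightarrow> L_cands l A M \<noteq> {}"

definition L :: "('a \<Rightarrow> nat) \<Rightarrow> 'a catom \<Rightarrow> 'a set \<Rightarrow> enat" where
  "L l A M = Inf (L_cands l A M)"

definition strongly_well_supported :: "'a program \<Rightarrow> 'a set \<Rightarrow> bool" where
  "strongly_well_supported P M \<longleftrightarrow> is_model P M \<and>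
     (\<exists>l :: 'a \<Rightarrow> nat. (\<forall>a\<in>M. l a \<ge> 1) \<and>
        (\<forall>b\<in>M. \<exists>r\<in>P. head r = elem b \<and> sat_body M r \<and>
           (\<forall>A\<in>set (pos r). L_defined l A M \<and> enat (l b) > L l A M) \<and>
           (\<forall>A\<in>set (neg r). L_defined l (compl_catom A) M \<and>
                             enat (l b) > L l (compl_catom A) M)))"

end

theory Submission
  imports Defs
begin

lemma enat_Inf_in: assumes "(S::enat set) \<noteq> {}" shows "Inf S \<in> S"
proof -
  from assms obtain x where "x \<in> S" by blast
  then have "(LEAST x. x \<in> S) \<in> S" by (rule LeastI)
  then show ?thesis using assms unfolding Inf_enat_def by simp
qed

lemma csat_mono: assumes "csat X M A" "X \<subseteq> S" "S \<subseteq> M" shows "csat S M A"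
proof -
  have c: "\<And>I. X \<inter> fst A \<subseteq> I \<Longrightarrow> I \<subseteq> M \<inter> fst A \<Longrightarrow> I \<in> snd A"
    using assms(1) unfolding csat_def by blast
  have "S \<inter> fst A \<in> snd A" using assms(2,3) by (intro c) auto
  moreover have "\<forall>I. S \<inter> fst A \<subseteq> I \<and> I \<subseteq> M \<inter> fst A \<longrightarrow> I \<in> snd A"
  proof (intro allI impI)
    fix I assume "S \<inter> fst A \<subseteq> I \<and> I \<subseteq> M \<inter> fst A"
    then have "X \<inter> fst A \<subseteq> I" "I \<subseteq> M \<inter> fst A" using assms(2) by auto
    then show "I \<in> snd A" by (rule c)
  qed
  ultimately show ?thesis unfolding csat_def sat_def by blast
qed
lemma csat_sat: assumes "csat S M A" "S \<subseteq> M" shows "sat M A"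
proof -
  have c: "\<And>I. S \<inter> fst A \<subseteq> I \<Longrightarrow> I \<subseteq> M \<inter> fst A \<Longrightarrow> I \<in> snd A"
    using assms(1) unfolding csat_def by blast
  have "M \<inter> fst A \<in> snd A" using assms(2) by (intro c) auto
  then show ?thesis unfolding sat_def .
qed

lemma compl_pos: "positive (compl_prog P)"
  unfolding positive_def compl_prog_def compl_rule_def by auto

lemma T_opI: "r \<in> Q \<Longrightarrow> head r = elem a \<Longrightarrow> \<forall>B\<in>set (pos r). csat S M B \<Longrightarrow> a \<in> T_op Q S M"
  unfolding T_op_def by blast

lemma T_opE: "a \<in> T_op Q S M \<Longrightarrow> (\<And>r. r \<in> Q \<Longrightarrow> head r = elem a \<Longrightarrow> \<forall>B\<in>set (pos r). csat S M B \<Longrightarrow> thesis) \<Longrightarrow> thesis"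
  unfolding T_op_def by blast

lemma T_step_mono:
  assumes "\<forall>i. T_iter Q i M \<subseteq> M"
  shows "T_iter Q i M \<subseteq> T_iter Q (Suc i) M"
proof (induction i)
  case 0 then show ?case by simp
next
  case (Suc i)
  have SM: "T_iter Q (Suc i) M \<subseteq> M" using assms by blast
  show ?case
  proof
    fix a assume "a \<in> T_iter Q (Suc i) M"
    then have "a \<in> T_op Q (T_iter Q i M) M" by (simp only: T_iter.simps)
    then obtain r where r: "r \<in> Q" "head r = elem a" "\<forall>B\<in>set (pos r). csat (T_iter Q i M) M B"
      by (rule T_opE)
    have "\<forall>B\<in>set (pos r). csat (T_iter Q (Suc i) M) M B"
    proof
      fix B assume "B \<in> set (pos r)"
      then have "csat (T_iter Q i M) M B" using r(3) by blast
      then show "csat (T_iter Q (Suc i) M) M B" using Suc.IH SM by (rule csat_mono)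
    qed
    then have "a \<in> T_op Q (T_iter Q (Suc i) M) M" using r(1,2) by (intro T_opI)
    then show "a \<in> T_iter Q (Suc (Suc i)) M" by (simp only: T_iter.simps)
  qed
qed

lemma T_mono:
  assumes "\<forall>i. T_iter Q i M \<subseteq> M" "i \<le> j"
  shows "T_iter Q i M \<subseteq> T_iter Q j M"
  using lift_Suc_mono_le[of "\<lambda>i. T_iter Q i M", OF T_step_mono[OF assms(1)] assms(2)] .

lemma T_sub_model:
  assumes "is_model Q M" "positive Q"
  shows "T_iter Q i M \<subseteq> M"
proof (induction i)
  case 0 then show ?case by simp
next
  case (Suc i)
  show ?case
  proof
    fix a assume "a \<in> T_iter Q (Suc i) M"
    then have "a \<in> T_op Q (T_iter Q i M) M" by (simp only: T_iter.simps)
    then obtain r where r: "r \<in> Q" "head r = elem a" "\<forall>B\<in>set (pos r). csat (T_iter Q i M) M B"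
      by (rule T_opE)
    have "neg r = []" using assms(2) r(1) unfolding positive_def by blast
    moreover have "\<forall>A\<in>set (pos r). sat M A" using r(3) Suc.IH csat_sat by blast
    ultimately have "sat_body M r" unfolding sat_body_def by simp
    then have "sat M (elem a)" using assms(1) r unfolding is_model_def by metis
    then show "a \<in> M" unfolding sat_def elem_def by auto
  qed
qed

lemma H_le: "(\<forall>x\<in>X. l x \<le> n) \<Longrightarrow> H l X \<le> enat n"
  unfolding H_def by (auto intro: Sup_least)

lemma H_ge: "x \<in> X \<Longrightarrow> enat (l x) \<le> H l X"
  unfolding H_def by (auto intro: Sup_upper)

theorem proposition6:
  fixes P :: "('a::countable) program" and M :: "'a set"
  assumes "wf_prog P" and "basic P"
  shows "answer_set_by_complement P M \<longleftrightarrow> strongly_well_supported (compl_prog P) M"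
proof -
  define Q where "Q = compl_prog P"
  have posQ: "positive Q" using compl_pos Q_def by simp
  have "answer_set Q M \<longleftrightarrow> strongly_well_supported Q M"
  proof
    assume as: "answer_set Q M"
    have mod: "is_model Q M" using as unfolding answer_set_def by blast
    have eq: "M = T_inf Q M" using as unfolding answer_set_def by blast
    have "\<forall>i. T_iter Q i M \<subseteq> T_inf Q M" unfolding T_inf_def by blast
    then have sub: "\<forall>i. T_iter Q i M \<subseteq> M" by (subst (asm) eq[symmetric])
    define l where "l a = (LEAST i. a \<in> T_iter Q i M)" for a
    have inl: "a \<in> T_iter Q (l a) M" if "a \<in> M" for a
    proof -
      have "a \<in> T_inf Q M" using that by (subst eq[symmetric])
      then obtain i where "a \<in> T_iter Q i M" unfolding T_inf_def by blast
      then show ?thesis unfolding l_def by (rule LeastI)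
    qed
    have lmin: "l a \<le> i" if "a \<in> T_iter Q i M" for a i
      unfolding l_def using that by (rule Least_le)
    have lpos: "l a \<ge> 1" if "a \<in> M" for a
      using inl[OF that] by (cases "l a") auto
    show "strongly_well_supported Q M"
      unfolding strongly_well_supported_def
    proof (intro conjI exI[of _ l] ballI)
      show "is_model Q M" by fact
      fix a assume "a \<in> M" then show "1 \<le> l a" by (rule lpos)
    next
      fix b assume bM: "b \<in> M"
      obtain k where k: "l b = Suc k" using lpos[OF bM] by (cases "l b") auto
      let ?S = "T_iter Q k M"
      from inl[OF bM] k obtain r where r: "r \<in> Q" "head r = elem b" "\<forall>B\<in>set (pos r). csat ?S M B"
        by (auto simp: T_op_def)
      have SM: "?S \<subseteq> M" using sub by blast
      have negr: "neg r = []" using posQ r(1) unfolding positive_def by blast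
      have body: "sat_body M r" using r(3) SM negr csat_sat unfolding sat_body_def by fastforce
      have levS: "\<forall>x\<in>?S. l x \<le> k" using lmin by blast
      have "\<forall>A\<in>set (pos r). L_defined l A M \<and> enat (l b) > L l A M"
      proof
        fix A assume A: "A \<in> set (pos r)"
        let ?X = "?S \<inter> fst A"
        have cs: "csat ?S M A" using r(3) A by blast
        have c1: "csat ?X M A" using cs unfolding csat_def sat_def by auto
        have c2: "?X \<in> snd A" using cs unfolding csat_def sat_def by auto
        have mem: "H l ?X \<in> L_cands l A M" unfolding L_cands_def using c1 c2 SM by blast
        have "H l ?X \<le> enat k" using levS by (intro H_le) auto
        moreover have "L l A M \<le> H l ?X" unfolding L_def using mem by (rule Inf_lower)
        moreover have "enat k < enat (l b)" using k by simp
        ultimately have "L l A M < enat (l b)" by (meson order_trans le_less_trans)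
        moreover have "L_defined l A M" using mem unfolding L_defined_def by blast
        ultimately show "L_defined l A M \<and> enat (l b) > L l A M" by blast
      qed
      then show "\<exists>r\<in>Q. head r = elem b \<and> sat_body M r \<and>
           (\<forall>A\<in>set (pos r). L_defined l A M \<and> enat (l b) > L l A M) \<and>
           (\<forall>A\<in>set (neg r). L_defined l (compl_catom A) M \<and> enat (l b) > L l (compl_catom A) M)"
        using r body negr by (intro bexI[of _ r]) simp_all
    qed
  next
    assume sw: "strongly_well_supported Q M"
    then have mod: "is_model Q M" unfolding strongly_well_supported_def by blast
    from sw obtain l :: "'a \<Rightarrow> nat" where lpos: "\<forall>a\<in>M. l a \<ge> 1" and
      sup: "\<forall>b\<in>M. \<exists>r\<in>Q. head r = elem b \<and> sat_body M r \<and>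
           (\<forall>A\<in>set (pos r). L_defined l A M \<and> enat (l b) > L l A M)"
      unfolding strongly_well_supported_def by blast
    have sub: "\<forall>i. T_iter Q i M \<subseteq> M" using T_sub_model[OF mod posQ] by blast
    have main: "b \<in> M \<longrightarrow> b \<in> T_iter Q (l b) M" for b
    proof (induction "l b" arbitrary: b rule: less_induct)
      case less
      show ?case
      proof
        assume bM: "b \<in> M"
        obtain k where k: "l b = Suc k" using lpos bM by (cases "l b") auto
        let ?S = "T_iter Q k M"
        from sup bM obtain r where r: "r \<in> Q" "head r = elem b"
          "\<forall>A\<in>set (pos r). L_defined l A M \<and> enat (l b) > L l A M" by blast
        have "\<forall>A\<in>set (pos r). csat ?S M A"
        proof
          fix A assume A: "A \<in> set (pos r)"
          have ne: "L_cands l A M \<noteq> {}" and lt: "L l A M < enat (l b)"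
            using r(3) A unfolding L_defined_def by auto
          from enat_Inf_in[OF ne] obtain X where X: "X \<in> snd A" "X \<subseteq> M" "csat X M A"
            "L l A M = H l X" unfolding L_def L_cands_def by auto
          have "X \<subseteq> ?S"
          proof
            fix x assume x: "x \<in> X"
            have "enat (l x) < enat (l b)" using H_ge[OF x, of l] X(4) lt by (metis le_less_trans)
            then have lx: "l x < l b" by simp
            have "x \<in> T_iter Q (l x) M" using less[OF lx] x X(2) by blast
            moreover have "l x \<le> k" using lx k by simp
            ultimately show "x \<in> ?S" using T_mono[OF sub] by blast
          qed
          then show "csat ?S M A" using X(3) sub by (blast intro: csat_mono)
        qed
        then show "b \<in> T_iter Q (l b) M" using r k by (auto simp: T_op_def)
      qed
    qed
    have "M \<subseteq> T_inf Q M" using main unfolding T_inf_def by blast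
    moreover have "T_inf Q M \<subseteq> M" using sub unfolding T_inf_def by blast
    ultimately have "M = T_inf Q M" by (rule equalityI)
    then show "answer_set Q M" using mod unfolding answer_set_def by blast
  qed
  then show ?thesis unfolding answer_set_by_complement_def Q_def .
qed

end
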